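(* Let $\alpha\in\mathbb{C}$ with $\Re(\alpha)>-1/2$ (so that also $\Re(\alpha+1)>-1/2$). Then the canonical forms of the dual sequences satisfy $$x\,u_0(\alpha)=\frac{\alpha^2}{2\alpha+1}\,u_0(\alpha+1).$$
   Context: Let $\mathcal{A}$ be the differential operator $\mathcal{A}f(x)=-x^2f''(x)-xf'(x)+x^2f(x)$ with iterates $\mathcal{A}^n$. For $\Re(\alpha)>-1/2$, $p_n(x;\alpha)=(-1)^n e^{x}x^{-\alpha}\mathcal{A}^n(e^{-x}x^{\alpha})$ is a polynomial of degree $n$ with leading coefficient $(-2)^n(\alpha+1/2)_n$, and $P_n(x;\alpha)=p_n(x;\alpha)/\big((-2)^n(\alpha+1/2)_n\big)$. $u_0(\alpha)$ is the linear functional on complex polynomials determined by $\langle u_0(\alpha),P_k(\cdot;\alpha)\rangle=\delta_{0,k}$, $k\ge0$; for a polynomial $g$, $gu$ denotes the form $f\mapsto\langle u,gf\rangle$. *)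

theory Defs
  imports "HOL-Analysis.Analysis" "HOL-Computational_Algebra.Polynomial"
begin

definition opA :: "(complex \<Rightarrow> complex) \<Rightarrow> complex \<Rightarrow> complex" where
  "opA f = (\<lambda>x. - (x^2 * deriv (deriv f) x) - x * deriv f x + x^2 * f x)"

text \<open>The weight e^{-x} x^alpha (principal branch, holomorphic off the nonpositive reals).\<close>
definition wgt :: "complex \<Rightarrow> complex \<Rightarrow> complex" where
  "wgt \<alpha> = (\<lambda>x. exp (- x) * x powr \<alpha>)"

definition pn :: "nat \<Rightarrow> complex \<Rightarrow> complex poly" where
  "pn n \<alpha> = (THE q. \<forall>x::real. x > 0 \<longrightarrow>
      poly q (of_real x) = (-1)^n * exp (of_real x) * (of_real x) powr (- \<alpha>)
                           * (opA ^^ n) (wgt \<alpha>) (of_real x))"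

text \<open>Monic normalisation P_n = p_n / ((-2)^n (alpha+1/2)_n).\<close>
definition Pn :: "nat \<Rightarrow> complex \<Rightarrow> complex poly" where
  "Pn n \<alpha> = smult (inverse ((-2)^n * pochhammer (\<alpha> + 1/2) n)) (pn n \<alpha>)"

definition u0 :: "complex \<Rightarrow> complex poly \<Rightarrow> complex" where
  "u0 \<alpha> = (THE u. (\<forall>f g. u (f + g) = u f + u g) \<and> (\<forall>c f. u (smult c f) = c * u f)
                 \<and> (\<forall>k. u (Pn k \<alpha>) = (if k = 0 then 1 else 0)))"

end

theory Submission imports Defs begin

definition TT :: "complex \<Rightarrow> complex poly \<Rightarrow> complex poly" where
  "TT a p = [:0,1:] * pderiv p + smult a p - [:0,1:] * p"
definition LL :: "complex \<Rightarrow> complex poly \<Rightarrow> complex poly" where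
  "LL a p = TT a (TT a p) - [:0,0,1:] * p"
fun qq :: "nat \<Rightarrow> complex \<Rightarrow> complex poly" where
  "qq 0 a = 1" | "qq (Suc n) a = LL a (qq n a)"

lemma X_mult: "[:0,1:] * (p::complex poly) = pCons 0 p"
  by (simp add: mult_pCons_left smult_1_left)
lemma X2_mult: "[:0,0,1:] * (p::complex poly) = pCons 0 (pCons 0 p)"
  by (simp add: mult_pCons_left smult_1_left)

lemma TT_X: "TT a ([:0,1:] * h) = [:0,1:] * TT (a+1) h"
  by (simp add: TT_def pderiv_mult pderiv_pCons algebra_simps smult_add_left)

lemma LL_X: "LL a ([:0,1:] * h) = [:0,1:] * LL (a+1) h"
proof -
  have "LL a ([:0,1:] * h) = TT a (TT a ([:0,1:] * h)) - [:0,0,1:] * ([:0,1:] * h)" by (simp only: LL_def)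
  also have "\<dots> = [:0,1:] * TT (a+1) (TT (a+1) h) - [:0,1:] * ([:0,0,1:] * h)"
    by (simp only: TT_X mult.left_commute)
  also have "\<dots> = [:0,1:] * LL (a+1) h" by (simp only: LL_def right_diff_distrib)
  finally show ?thesis .
qed

lemma TT_diff: "TT a (p - q) = TT a p - TT a q"
  by (simp add: TT_def pderiv_diff algebra_simps smult_diff_right)
lemma TT_smult: "TT a (smult c p) = smult c (TT a p)"
  by (simp add: TT_def pderiv_smult algebra_simps smult_diff_right smult_add_right)
lemma LL_diff: "LL a (p - q) = LL a p - LL a q"
  by (simp add: LL_def TT_diff algebra_simps)
lemma LL_smult: "LL a (smult c p) = smult c (LL a p)"
  by (simp add: LL_def TT_smult algebra_simps smult_diff_right)

lemma qq1: "qq 1 a = [:a^2, -(2*a+1):]"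
  by (simp add: LL_def TT_def pderiv_pCons X_mult X2_mult algebra_simps power2_eq_square)

lemma key: "smult (2*a+1) ([:0,1:] * qq k (a+1)) = smult (a^2) (qq k a) - qq (Suc k) a"
proof (induction k)
  case 0
  show ?case using qq1[of a] by (simp add: X_mult)
next
  case (Suc k)
  have "smult (2*a+1) ([:0,1:] * qq (Suc k) (a+1)) = smult (2*a+1) (LL a ([:0,1:] * qq k (a+1)))"
    by (simp only: LL_X qq.simps add.commute)
  also have "\<dots> = LL a (smult (2*a+1) ([:0,1:] * qq k (a+1)))" by (simp only: LL_smult)
  also have "\<dots> = smult (a^2) (qq (Suc k) a) - qq (Suc (Suc k)) a"
    unfolding Suc by (simp only: LL_diff LL_smult qq.simps)
  finally show ?case .
qed

lemma coeff_TT0: "coeff (TT a p) 0 = a * coeff p 0"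
  by (simp add: TT_def X_mult coeff_pderiv)
lemma coeff_TTS: "coeff (TT a p) (Suc k) = (of_nat (Suc k) + a) * coeff p (Suc k) - coeff p k"
  by (simp add: TT_def X_mult coeff_pderiv algebra_simps)

lemma coeff_LL0: "coeff (LL a p) 0 = a^2 * coeff p 0"
  by (simp add: LL_def coeff_TT0 X2_mult power2_eq_square)
lemma coeff_LLS: "coeff (LL a p) (Suc k) = (of_nat (Suc k) + a)^2 * coeff p (Suc k) - (2 * of_nat k + 2*a + 1) * coeff p k"
proof (cases k)
  case 0 then show ?thesis by (simp add: LL_def coeff_TT0 coeff_TTS X2_mult power2_eq_square algebra_simps)
next
  case (Suc j) then show ?thesis by (simp add: LL_def coeff_TT0 coeff_TTS X2_mult power2_eq_square algebra_simps)
qed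

lemma qq_coeff: "coeff (qq n a) n = (-2)^n * pochhammer (a + 1/2) n \<and> (\<forall>j>n. coeff (qq n a) j = 0)"
proof (induction n)
  case 0
  then show ?case by (auto simp: coeff_1)
next
  case (Suc n)
  have hi: "\<forall>j>Suc n. coeff (qq (Suc n) a) j = 0"
  proof (intro allI impI)
    fix j assume "j > Suc n"
    then obtain k where "j = Suc k" "k > n" by (cases j) auto
    then show "coeff (qq (Suc n) a) j = 0" using Suc by (simp add: coeff_LLS)
  qed
  have "coeff (qq (Suc n) a) (Suc n) = - (2 * of_nat n + 2*a + 1) * ((-2)^n * pochhammer (a + 1/2) n)"
    using Suc by (simp add: coeff_LLS algebra_simps)
  also have "\<dots> = (-2)^(Suc n) * pochhammer (a + 1/2) (Suc n)"
    by (simp add: pochhammer_Suc algebra_simps)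
  finally show ?case using hi by simp
qed

definition lin :: "(complex poly \<Rightarrow> complex) \<Rightarrow> bool" where
  "lin u \<longleftrightarrow> (\<forall>f g. u (f + g) = u f + u g) \<and> (\<forall>c f. u (smult c f) = c * u f)"

definition triang :: "(nat \<Rightarrow> complex poly) \<Rightarrow> bool" where
  "triang Q \<longleftrightarrow> (\<forall>k. coeff (Q k) k = 1 \<and> (\<forall>j>k. coeff (Q k) j = 0))"

lemma lin_zero: "lin u \<Longrightarrow> u 0 = 0"
  unfolding lin_def by (metis add_0 add_cancel_right_right)

lemma uniq_aux:
  assumes T: "triang Q" and u: "lin u" and v: "lin v" and e: "\<And>k. u (Q k) = v (Q k)"
  shows "\<forall>f. (\<forall>j\<ge>n. coeff f j = 0) \<longrightarrow> u f = v f"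
proof (induction n)
  case 0
  show ?case
  proof (intro allI impI)
    fix f :: "complex poly" assume "\<forall>j\<ge>0. coeff f j = 0"
    then have "f = 0" by (intro poly_eqI) simp
    then show "u f = v f" using lin_zero[OF u] lin_zero[OF v] by simp
  qed
next
  case (Suc n)
  show ?case
  proof (intro allI impI)
    fix f :: "complex poly" assume f: "\<forall>j\<ge>Suc n. coeff f j = 0"
    define g where "g = f - smult (coeff f n) (Q n)"
    have "\<forall>j\<ge>n. coeff g j = 0"
    proof (intro allI impI)
      fix j assume "j \<ge> n"
      then consider "j = n" | "j > n" by linarith
      then show "coeff g j = 0"
        using f T unfolding g_def triang_def by cases auto
    qed
    then have ug: "u g = v g" using Suc by blast
    have fe: "f = g + smult (coeff f n) (Q n)" by (simp add: g_def)
    have "u (g + smult (coeff f n) (Q n)) = v (g + smult (coeff f n) (Q n))"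
      using u v ug e unfolding lin_def by simp
    then show "u f = v f" using fe by simp
  qed
qed

lemma uniq:
  assumes "triang Q" "lin u" "lin v" "\<And>k. u (Q k) = v (Q k)"
  shows "u = v"
proof
  fix f :: "complex poly"
  have "\<forall>j\<ge>Suc (degree f). coeff f j = 0" by (simp add: coeff_eq_0)
  then show "u f = v f" using uniq_aux[OF assms] by blast
qed

function mm :: "(nat \<Rightarrow> complex poly) \<Rightarrow> nat \<Rightarrow> complex" where
  "mm Q j = (if j = 0 then 1 else 0) - (\<Sum>i<j. coeff (Q j) i * mm Q i)"
  by auto
termination by (relation "Wellfounded.measure snd") auto
declare mm.simps[simp del]

definition UU :: "(nat \<Rightarrow> complex poly) \<Rightarrow> complex poly \<Rightarrow> complex" where
  "UU Q f = (\<Sum>i<Suc (degree f). coeff f i * mm Q i)"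

lemma UU_N:
  fixes f :: "complex poly"
  assumes "\<forall>j\<ge>N. coeff f j = 0"
  shows "UU Q f = (\<Sum>i<N. coeff f i * mm Q i)"
proof -
  define M where "M = max N (Suc (degree f))"
  have "(\<Sum>i<M. coeff f i * mm Q i) = (\<Sum>i<N. coeff f i * mm Q i)"
    by (rule sum.mono_neutral_right) (use assms in \<open>auto simp: M_def\<close>)
  moreover have "(\<Sum>i<M. coeff f i * mm Q i) = UU Q f"
    unfolding UU_def
    by (rule sum.mono_neutral_right) (auto simp: M_def coeff_eq_0)
  ultimately show ?thesis by simp
qed

lemma UU_lin: "lin (UU Q)"
  unfolding lin_def
proof (intro conjI allI)
  fix f g :: "complex poly"
  define N where "N = Suc (degree f + degree g)"
  have hf: "\<forall>j\<ge>N. coeff f j = 0" and hg: "\<forall>j\<ge>N. coeff g j = 0"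
    and hfg: "\<forall>j\<ge>N. coeff (f+g) j = 0"
    by (auto simp: N_def coeff_eq_0)
  show "UU Q (f + g) = UU Q f + UU Q g"
    by (simp add: UU_N[OF hf] UU_N[OF hg] UU_N[OF hfg] sum.distrib algebra_simps)
next
  fix c and f :: "complex poly"
  define N where "N = Suc (degree f)"
  have hf: "\<forall>j\<ge>N. coeff f j = 0" and hcf: "\<forall>j\<ge>N. coeff (smult c f) j = 0"
    by (auto simp: N_def coeff_eq_0)
  show "UU Q (smult c f) = c * UU Q f"
    by (simp add: UU_N[OF hf] UU_N[OF hcf] sum_distrib_left algebra_simps)
qed

lemma UU_Q:
  assumes T: "triang Q"
  shows "UU Q (Q k) = (if k = 0 then 1 else 0)"
proof -
  have h: "\<forall>j\<ge>Suc k. coeff (Q k) j = 0" using T unfolding triang_def by auto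
  have "UU Q (Q k) = (\<Sum>i<Suc k. coeff (Q k) i * mm Q i)" by (rule UU_N[OF h])
  also have "\<dots> = coeff (Q k) k * mm Q k + (\<Sum>i<k. coeff (Q k) i * mm Q i)"
    by (simp add: lessThan_Suc)
  also have "\<dots> = (if k = 0 then 1 else 0)"
    using T mm.simps[of Q k] unfolding triang_def by simp
  finally show ?thesis .
qed

lemma THE_char:
  assumes T: "triang Q"
  defines "w \<equiv> (THE u. (\<forall>f g. u (f + g) = u f + u g) \<and> (\<forall>c f. u (smult c f) = c * u f)
                 \<and> (\<forall>k. u (Q k) = (if k = 0 then 1 else 0)))"
  shows "lin w \<and> (\<forall>k. w (Q k) = (if k = 0 then 1 else 0))"
proof -
  have "(\<lambda>u. (\<forall>f g. u (f + g) = u f + u g) \<and> (\<forall>c f. u (smult c f) = c * u f)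
                 \<and> (\<forall>k. u (Q k) = (if k = 0 then 1 else 0))) w"
    unfolding w_def
  proof (rule theI[where a = "UU Q"])
    show "(\<forall>f g. UU Q (f + g) = UU Q f + UU Q g) \<and> (\<forall>c f. UU Q (smult c f) = c * UU Q f)
                 \<and> (\<forall>k. UU Q (Q k) = (if k = 0 then 1 else 0))"
      using UU_lin[of Q] UU_Q[OF T] unfolding lin_def by blast
  next
    fix u assume "(\<forall>f g. u (f + g) = u f + u g) \<and> (\<forall>c f. u (smult c f) = c * u f)
                 \<and> (\<forall>k. u (Q k) = (if k = 0 then 1 else 0))"
    then show "u = UU Q"
      using uniq[OF T, of u "UU Q"] UU_lin[of Q] UU_Q[OF T] unfolding lin_def by auto
  qed
  then show ?thesis unfolding lin_def by blast
qed

lemma powr_shift1: "(z::complex) \<noteq> 0 \<Longrightarrow> z powr b = z * z powr (b - 1)"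
proof -
  assume "z \<noteq> 0"
  have "z powr b = z powr (1 + (b - 1))" by simp
  also have "\<dots> = z * z powr (b - 1)" by (simp only: powr_add powr_to_1)
  finally show ?thesis .
qed

lemma G_deriv:
  assumes "Re z > 0"
  shows "((\<lambda>z. exp (-z) * z powr \<beta> * poly r z) has_field_derivative
           exp (-z) * z powr (\<beta> - 1) * poly (TT \<beta> r) z) (at z)"
proof -
  have nz: "z \<notin> \<real>\<^sub>\<le>\<^sub>0" using assms by (auto simp: complex_nonpos_Reals_iff)
  have z0: "z \<noteq> 0" using assms by auto
  have "((\<lambda>z. exp (-z) * z powr \<beta> * poly r z) has_field_derivative
      (- exp (-z)) * z powr \<beta> * poly r z + exp (-z) * (\<beta> * z powr (\<beta> - 1)) * poly r z
        + exp (-z) * z powr \<beta> * poly (pderiv r) z) (at z)"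
    using nz by (auto intro!: derivative_eq_intros has_field_derivative_powr[OF nz] poly_DERIV simp: algebra_simps)
  moreover have "(- exp (-z)) * z powr \<beta> * poly r z + exp (-z) * (\<beta> * z powr (\<beta> - 1)) * poly r z
        + exp (-z) * z powr \<beta> * poly (pderiv r) z = exp (-z) * z powr (\<beta> - 1) * poly (TT \<beta> r) z"
    by (simp add: powr_shift1[OF z0, of \<beta>] TT_def algebra_simps)
  ultimately show ?thesis by simp
qed

lemma deriv_G:
  assumes "Re z > 0"
  shows "deriv (\<lambda>z. c * (exp (-z) * z powr \<beta> * poly r z)) z =
           c * (exp (-z) * z powr (\<beta> - 1) * poly (TT \<beta> r) z)"
  by (intro DERIV_imp_deriv DERIV_cmult G_deriv[OF assms])

lemma openS: "open {z::complex. Re z > 0}"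
  by (simp add: open_halfspace_Re_gt)

lemma ev_S: "Re z > 0 \<Longrightarrow> eventually (\<lambda>w. Re w > 0) (nhds z)"
  using eventually_nhds_in_open[OF openS, of z] by simp

lemma opA_iter:
  "\<forall>z. Re z > 0 \<longrightarrow> (opA ^^ n) (wgt \<alpha>) z = (-1)^n * (exp (-z) * z powr \<alpha> * poly (qq n \<alpha>) z)"
proof (induction n)
  case 0
  then show ?case by (simp add: wgt_def)
next
  case (Suc n)
  define F where "F = (opA ^^ n) (wgt \<alpha>)"
  define q where "q = qq n \<alpha>"
  define c :: complex where "c = (-1)^n"
  define G where "G = (\<lambda>z. c * (exp (-z) * z powr \<alpha> * poly q z))"
  have FG: "\<And>z. Re z > 0 \<Longrightarrow> F z = G z" using Suc unfolding F_def G_def c_def q_def by simp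
  have d1: "\<And>z. Re z > 0 \<Longrightarrow> deriv F z = c * (exp (-z) * z powr (\<alpha> - 1) * poly (TT \<alpha> q) z)"
  proof -
    fix z :: complex assume z: "Re z > 0"
    have "deriv F z = deriv G z"
      by (rule deriv_cong_ev) (use ev_S[OF z] FG in \<open>auto elim!: eventually_mono\<close>)
    also have "\<dots> = c * (exp (-z) * z powr (\<alpha> - 1) * poly (TT \<alpha> q) z)"
      unfolding G_def by (rule deriv_G[OF z])
    finally show "deriv F z = c * (exp (-z) * z powr (\<alpha> - 1) * poly (TT \<alpha> q) z)" .
  qed
  show ?case
  proof (intro allI impI)
    fix z :: complex assume z: "Re z > 0"
    have z0: "z \<noteq> 0" using z by auto
    have "deriv (deriv F) z = deriv (\<lambda>z. c * (exp (-z) * z powr (\<alpha> - 1) * poly (TT \<alpha> q) z)) z"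
      by (rule deriv_cong_ev) (use ev_S[OF z] d1 in \<open>auto elim!: eventually_mono\<close>)
    also have "\<dots> = c * (exp (-z) * z powr (\<alpha> - 1 - 1) * poly (TT (\<alpha> - 1) (TT \<alpha> q)) z)"
      by (rule deriv_G[OF z])
    finally have d2: "deriv (deriv F) z = c * (exp (-z) * z powr (\<alpha> - 1 - 1) * poly (TT (\<alpha> - 1) (TT \<alpha> q)) z)" .
    have p1: "z powr \<alpha> = z * z powr (\<alpha> - 1)" by (rule powr_shift1[OF z0])
    have p2: "z powr (\<alpha> - 1) = z * z powr (\<alpha> - 1 - 1)" by (rule powr_shift1[OF z0])
    have TTs: "TT (\<alpha> - 1) r + r = TT \<alpha> r" for r
      by (simp add: TT_def algebra_simps smult_diff_left)
    have "(opA ^^ Suc n) (wgt \<alpha>) z = opA F z" by (simp add: F_def)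
    also have "\<dots> = - (z^2 * deriv (deriv F) z) - z * deriv F z + z^2 * F z"
      by (simp add: opA_def)
    also have "\<dots> = c * (exp (-z) * z powr (\<alpha> - 1 - 1) * z^2 *
         (- poly (TT (\<alpha> - 1) (TT \<alpha> q)) z - poly (TT \<alpha> q) z + z^2 * poly q z))"
      by (simp add: d1[OF z] d2 FG[OF z] G_def p1 p2 algebra_simps power2_eq_square)
    also have "- poly (TT (\<alpha> - 1) (TT \<alpha> q)) z - poly (TT \<alpha> q) z + z^2 * poly q z
               = - poly (LL \<alpha> q) z"
      using arg_cong[OF TTs[of "TT \<alpha> q"], of "\<lambda>p. poly p z"]
      by (simp add: LL_def X2_mult power2_eq_square algebra_simps)
    also have "c * (exp (-z) * z powr (\<alpha> - 1 - 1) * z^2 * (- poly (LL \<alpha> q) z))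
       = (-1)^Suc n * (exp (-z) * z powr \<alpha> * poly (qq (Suc n) \<alpha>) z)"
      by (simp add: c_def q_def p1 p2 power2_eq_square algebra_simps)
    finally show "(opA ^^ Suc n) (wgt \<alpha>) z = (-1)^Suc n * (exp (-z) * z powr \<alpha> * poly (qq (Suc n) \<alpha>) z)" .
  qed
qed

lemma poly_eq_pos:
  assumes "\<forall>x::real. x > 0 \<longrightarrow> poly p (of_real x) = poly q (of_real x)"
  shows "p = (q :: complex poly)"
proof (rule ccontr)
  assume "p \<noteq> q"
  then have "p - q \<noteq> 0" by simp
  then have fin: "finite {x. poly (p - q) x = 0}" by (rule poly_roots_finite)
  have "of_real ` {0::real<..} \<subseteq> {x. poly (p - q) x = 0}" using assms by auto
  then have "finite (of_real ` {0::real<..} :: complex set)" using fin finite_subset by blast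
  moreover have "inj_on (of_real :: real \<Rightarrow> complex) {0<..}" by (auto intro: inj_onI)
  ultimately have "finite {0::real<..}" using finite_imageD by blast
  then show False using infinite_Ioi[of "0::real"] by blast
qed

lemma pn_prop: "\<forall>x::real. x > 0 \<longrightarrow>
      poly (qq n \<alpha>) (of_real x) = (-1)^n * exp (of_real x) * (of_real x) powr (- \<alpha>)
                           * (opA ^^ n) (wgt \<alpha>) (of_real x)"
  proof (intro allI impI)
    fix x :: real assume x: "x > 0"
    define z where "z = complex_of_real x"
    have z: "Re z > 0" "z \<noteq> 0" using x by (auto simp: z_def)
    have "z powr (- \<alpha>) * z powr \<alpha> = z powr (- \<alpha> + \<alpha>)" by (simp only: powr_add)
    then have pw: "z powr (- \<alpha>) * z powr \<alpha> = 1"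
      using z by (simp add: powr_def)
    have ex: "exp z * exp (-z) = 1" by (simp add: exp_minus)
    have sg: "((-1::complex)^n) * (-1)^n = 1" by (simp add: power_mult_distrib[symmetric])
    have "(-1)^n * exp z * z powr (- \<alpha>) * ((-1)^n * (exp (-z) * z powr \<alpha> * poly (qq n \<alpha>) z))
        = ((-1)^n * (-1)^n) * (exp z * exp (-z)) * (z powr (- \<alpha>) * z powr \<alpha>) * poly (qq n \<alpha>) z"
      by (simp add: algebra_simps)
    also have "\<dots> = poly (qq n \<alpha>) z" by (simp only: pw ex sg) simp
    finally show "poly (qq n \<alpha>) (of_real x) = (-1)^n * exp (of_real x) * (of_real x) powr (- \<alpha>)
                           * (opA ^^ n) (wgt \<alpha>) (of_real x)"
      using opA_iter[of n \<alpha>] z unfolding z_def by simp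
  qed

lemma pn_eq: "pn n \<alpha> = qq n \<alpha>"
  unfolding pn_def
proof (rule the_equality)
  show "\<forall>x::real. x > 0 \<longrightarrow>
      poly (qq n \<alpha>) (of_real x) = (-1)^n * exp (of_real x) * (of_real x) powr (- \<alpha>)
                           * (opA ^^ n) (wgt \<alpha>) (of_real x)" by (rule pn_prop)
next
  fix p assume "\<forall>x::real. x > 0 \<longrightarrow>
      poly p (of_real x) = (-1)^n * exp (of_real x) * (of_real x) powr (- \<alpha>)
                           * (opA ^^ n) (wgt \<alpha>) (of_real x)"
  then show "p = qq n \<alpha>" using pn_prop[of n \<alpha>] by (intro poly_eq_pos) simp
qed

lemma lin_diff: "lin u \<Longrightarrow> u (f - g) = u f - u g"
  unfolding lin_def by (metis diff_add_cancel eq_diff_eq)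
lemma lin_smult: "lin u \<Longrightarrow> u (smult c f) = c * u f"
  unfolding lin_def by blast

definition ss :: "complex \<Rightarrow> nat \<Rightarrow> complex" where
  "ss a k = (-2)^k * pochhammer (a + 1/2) k"

lemma ss_nz: assumes "Re a > - 1/2" shows "ss a k \<noteq> 0"
proof
  assume "ss a k = 0"
  then have "pochhammer (a + 1/2) k = 0" by (simp add: ss_def)
  then obtain j where "a + 1/2 = - of_nat j" by (auto simp: pochhammer_eq_0_iff)
  then have "Re (a + 1/2) = Re (- of_nat j)" by (simp only:)
  then have "Re (a + 1/2) = - real j" by simp
  then show False using assms by simp
qed

lemma Pn_eq: "Pn k a = smult (inverse (ss a k)) (qq k a)"
  by (simp add: Pn_def pn_eq ss_def)

lemma qq_Pn: assumes "Re a > - 1/2" shows "qq k a = smult (ss a k) (Pn k a)"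
  using ss_nz[OF assms] by (simp add: Pn_eq)

lemma triang_Pn: assumes "Re a > - 1/2" shows "triang (\<lambda>k. Pn k a)"
  unfolding triang_def Pn_eq using qq_coeff[of _ a] ss_nz[OF assms]
  by (auto simp: ss_def field_simps)

lemma u0_char: assumes "Re a > - 1/2"
  shows "lin (u0 a) \<and> (\<forall>k. u0 a (Pn k a) = (if k = 0 then 1 else 0))"
  unfolding u0_def by (rule THE_char[OF triang_Pn[OF assms]])

theorem mainTheorem11:
  fixes \<alpha> :: complex
  assumes "Re \<alpha> > - 1/2"
  shows "\<forall>f. u0 \<alpha> ([:0, 1:] * f) = (\<alpha>^2 / (2 * \<alpha> + 1)) * u0 (\<alpha> + 1) f"
proof -
  have a1: "Re (\<alpha> + 1) > - 1/2" using assms by simp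
  define U where "U = u0 \<alpha>"
  define V where "V = u0 (\<alpha> + 1)"
  define c where "c = \<alpha>^2 / (2 * \<alpha> + 1)"
  have U: "lin U" "\<And>k. U (Pn k \<alpha>) = (if k = 0 then 1 else 0)"
    using u0_char[OF assms] unfolding U_def by auto
  have V: "lin V" "\<And>k. V (Pn k (\<alpha>+1)) = (if k = 0 then 1 else 0)"
    using u0_char[OF a1] unfolding V_def by auto
  have nz: "2 * \<alpha> + 1 \<noteq> 0"
  proof
    assume "2 * \<alpha> + 1 = 0"
    then have "Re (2 * \<alpha> + 1) = 0" by simp
    then show False using assms by simp
  qed
  have Uq: "U (qq j \<alpha>) = (if j = 0 then 1 else 0)" for j
    using U qq_Pn[OF assms, of j] by (simp add: lin_smult ss_def)
  have linW: "lin (\<lambda>f. U ([:0,1:] * f))"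
    using U(1) unfolding lin_def by (simp only: distrib_left mult_smult_right) blast
  have linW': "lin (\<lambda>f. c * V f)"
    using V(1) unfolding lin_def by (simp add: algebra_simps)
  have "(\<lambda>f. U ([:0,1:] * f)) = (\<lambda>f. c * V f)"
  proof (rule uniq[OF triang_Pn[OF a1] linW linW'])
    fix k
    have "smult (2*\<alpha>+1) ([:0,1:] * qq k (\<alpha>+1)) = smult (\<alpha>^2) (qq k \<alpha>) - qq (Suc k) \<alpha>"
      by (rule key)
    then have "[:0,1:] * qq k (\<alpha>+1) = smult (inverse (2*\<alpha>+1)) (smult (\<alpha>^2) (qq k \<alpha>) - qq (Suc k) \<alpha>)"
      using nz by (metis smult_smult left_inverse smult_1_left)
    then have "U ([:0,1:] * qq k (\<alpha>+1)) = inverse (2*\<alpha>+1) * (\<alpha>^2 * U (qq k \<alpha>) - U (qq (Suc k) \<alpha>))"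
      using U(1) by (simp add: lin_smult lin_diff)
    also have "\<dots> = (if k = 0 then c else 0)"
      by (cases k) (simp_all add: Uq c_def divide_inverse mult.commute del: qq.simps)
    finally have e: "U ([:0,1:] * qq k (\<alpha>+1)) = (if k = 0 then c else 0)" .
    have "U ([:0,1:] * Pn k (\<alpha>+1)) = inverse (ss (\<alpha>+1) k) * U ([:0,1:] * qq k (\<alpha>+1))"
      using U(1) by (simp only: Pn_eq mult_smult_right lin_smult)
    also have "\<dots> = c * V (Pn k (\<alpha>+1))"
      by (simp only: e V(2)) (simp add: ss_def)
    finally show "U ([:0,1:] * Pn k (\<alpha>+1)) = c * V (Pn k (\<alpha>+1))" .
  qed
  then show ?thesis unfolding U_def V_def c_def by metis
qed
end
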